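(* Let $\bm{C}\in\mathbb{R}^{n\times m}$ have i.i.d. entries $\bm{C}_{ij}\sim\mathrm{Unif}(0,1)$ (so that $\mathbb{P}(\mathrm{rk}(\bm{C})<\min\{n,m\})=0$), and let $\bm{a}\in\Delta_n$, $\bm{b}\in\Delta_m$ have strictly positive entries. Then, with probability one, the entrywise exponentials $\exp\{\bm{C}\}$ and $\exp\{-\bm{C}\}$ have full rank $\min\{n,m\}$, and the output $\mathrm{diag}(\bm{u})\,e^{-\bm{C}}\,\mathrm{diag}(\bm{v})$ of the Sinkhorn algorithm $\textit{Sinkhorn}(e^{-\bm{C}},\bm{a},\bm{b})$ has full rank $\min\{n,m\}$.
   Context: The Sinkhorn algorithm with kernel $\bm{K}\in\mathbb{R}_{>0}^{n\times m}$ and marginals $\bm{a},\bm{b}$ starts from $\bm{u}=\bm{1}_n$, $\bm{v}=\bm{1}_m$ and alternates the updates $\bm{u}\gets\bm{a}/(\bm{K}\bm{v})$, $\bm{v}\gets\bm{b}/(\bm{K}^{\mathrm T}\bm{u})$ (entrywise division), returning $\mathrm{diag}(\bm{u})\bm{K}\mathrm{diag}(\bm{v})$. $\Delta_d$ denotes the probability simplex in $\mathbb{R}^d$. *)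

theory Defs
  imports "HOL-Analysis.Analysis" "HOL-Probability.Probability"
begin

definition prob_simplex :: "(real^'d) set" where
  "prob_simplex = {x. (\<forall>i. 0 \<le> x $ i) \<and> (\<Sum>i\<in>UNIV. x $ i) = 1}"

definition diag_mat :: "real^'n \<Rightarrow> real^'n^'n" where
  "diag_mat x = (\<chi> i j. if i = j then x $ i else 0)"

fun sinkhorn_uv :: "real^'m^'n \<Rightarrow> real^'n \<Rightarrow> real^'m \<Rightarrow> nat \<Rightarrow> (real^'n) \<times> (real^'m)" where
  "sinkhorn_uv K a b 0 = ((\<chi> i. 1), (\<chi> j. 1))"
| "sinkhorn_uv K a b (Suc N) =
     (let (u, v) = sinkhorn_uv K a b N;
          u' = (\<chi> i. a $ i / (K *v v) $ i);
          v' = (\<chi> j. b $ j / (transpose K *v u') $ j)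
      in (u', v'))"

definition sinkhorn :: "real^'m^'n \<Rightarrow> real^'n \<Rightarrow> real^'m \<Rightarrow> nat \<Rightarrow> real^'m^'n" where
  "sinkhorn K a b N = (case sinkhorn_uv K a b N of (u, v) \<Rightarrow> diag_mat u ** K ** diag_mat v)"

end

theory Submission
  imports Defs
begin


lemma if01_mult[simp]: "(if P then 1 else 0) * x = (if P then x else (0::real))"
  "x * (if P then 1 else 0) = (if P then x else (0::real))" by auto

lemma det_nz_rank:
  fixes B :: "real^'k^'k"
  assumes "det B \<noteq> 0"
  shows "rank B = CARD('k)"
  using assms invertible_det_nz full_rank_injective
  by (metis inj_matrix_vector_mult)

lemma rank_sub_cols:
  fixes A :: "real^'m^'n" and \<sigma> :: "'n \<Rightarrow> 'm"
  assumes "inj \<sigma>" "det (\<chi> i i'. A $ i $ \<sigma> i') \<noteq> 0"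
  shows "rank A = CARD('n)"
proof -
  define P :: "real^'n^'m" where "P = (\<chi> j i'. if j = \<sigma> i' then 1 else 0)"
  have "A ** P = (\<chi> i i'. A $ i $ \<sigma> i')"
    by (simp add: P_def matrix_matrix_mult_def vec_eq_iff)
  hence "rank (A ** P) = CARD('n)" using assms det_nz_rank by metis
  moreover have "rank (A ** P) \<le> rank A" by (rule rank_mul_le_left)
  moreover have "rank A \<le> CARD('n)" using rank_bound[of A] by simp
  ultimately show ?thesis by linarith
qed

lemma rank_sub_rows:
  fixes A :: "real^'m^'n" and \<sigma> :: "'m \<Rightarrow> 'n"
  assumes "inj \<sigma>" "det (\<chi> j' j. A $ \<sigma> j' $ j) \<noteq> 0"
  shows "rank A = CARD('m)"
proof -
  define P :: "real^'n^'m" where "P = (\<chi> j' i. if i = \<sigma> j' then 1 else 0)"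
  have "P ** A = (\<chi> j' j. A $ \<sigma> j' $ j)"
    by (simp add: P_def matrix_matrix_mult_def vec_eq_iff)
  hence "rank (P ** A) = CARD('m)" using assms det_nz_rank by metis
  moreover have "rank (P ** A) \<le> rank A" by (rule rank_mul_le_right)
  moreover have "rank A \<le> CARD('m)" using rank_bound[of A] by simp
  ultimately show ?thesis by linarith
qed

lemma diag_mult: "diag_mat x ** diag_mat y = diag_mat (\<chi> i. x $ i * y $ i)"
proof -
  have "(\<Sum>k\<in>UNIV. (if i = k then x $ i else 0) * (if k = j then y $ k else 0)) = (if i = j then x $ i * y $ i else 0)" for i j
    by (simp add: if_distrib[of "\<lambda>t. t * _"] cong: if_cong)
  thus ?thesis by (simp add: diag_mat_def matrix_matrix_mult_def vec_eq_iff)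
qed

lemma diag_one: "diag_mat (\<chi> i. 1) = mat 1"
  by (simp add: diag_mat_def mat_def vec_eq_iff)

lemma rank_diag_scale:
  fixes K :: "real^'m^'n"
  assumes "\<And>i. u $ i \<noteq> 0" "\<And>j. v $ j \<noteq> 0"
  shows "rank (diag_mat u ** K ** diag_mat v) = rank K"
proof -
  define u' where "u' = (\<chi> i. 1 / u $ i)"
  define v' where "v' = (\<chi> i. 1 / v $ i)"
  have u1: "diag_mat u' ** diag_mat u = mat 1"
    using assms(1) by (simp add: diag_mult u'_def diag_one[symmetric])
  have v1: "diag_mat v ** diag_mat v' = mat 1"
    using assms(2) by (simp add: diag_mult v'_def diag_one[symmetric])
  have "K = diag_mat u' ** (diag_mat u ** K ** diag_mat v) ** diag_mat v'"
  proof -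
    have "diag_mat u' ** (diag_mat u ** K ** diag_mat v) ** diag_mat v'
       = (diag_mat u' ** diag_mat u) ** K ** (diag_mat v ** diag_mat v')"
      by (simp add: matrix_mul_assoc)
    thus ?thesis by (simp add: u1 v1)
  qed
  hence "rank K \<le> rank (diag_mat u ** K ** diag_mat v)"
    by (metis rank_mul_le_left rank_mul_le_right order_trans)
  moreover have "rank (diag_mat u ** K ** diag_mat v) \<le> rank K"
    by (metis rank_mul_le_left rank_mul_le_right order_trans)
  ultimately show ?thesis by linarith
qed

lemma sinkhorn_pos:
  fixes K :: "real^'m^'n"
  assumes "\<And>i j. K $ i $ j > 0" "\<And>i. a $ i > 0" "\<And>j. b $ j > 0"
  shows "(\<forall>i. fst (sinkhorn_uv K a b N) $ i > 0) \<and> (\<forall>j. snd (sinkhorn_uv K a b N) $ j > 0)"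
proof (induction N)
  case 0 then show ?case by simp
next
  case (Suc N)
  obtain u v where uv: "sinkhorn_uv K a b N = (u, v)" by fastforce
  with Suc have v: "\<And>j. v $ j > 0" by auto
  have Kv: "(K *v v) $ i > 0" for i
    unfolding matrix_vector_mult_def using assms(1) v
    by (simp add: sum_pos mult_pos_pos)
  define u' where "u' = (\<chi> i. a $ i / (K *v v) $ i)"
  have u': "u' $ i > 0" for i using Kv assms(2) by (simp add: u'_def)
  have Ku: "(transpose K *v u') $ j > 0" for j
    unfolding matrix_vector_mult_def using assms(1) u'
    by (simp add: sum_pos mult_pos_pos transpose_def)
  show ?case using uv u' Ku assms(3) by (simp add: u'_def[symmetric] Let_def)
qed

lemma sinkhorn_rank:
  fixes K :: "real^'m^'n"
  assumes "\<And>i j. K $ i $ j > 0" "\<And>i. a $ i > 0" "\<And>j. b $ j > 0"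
  shows "rank (sinkhorn K a b N) = rank K"
proof -
  obtain u v where uv: "sinkhorn_uv K a b N = (u, v)" by fastforce
  with sinkhorn_pos[OF assms, of N] have "\<And>i. u $ i \<noteq> 0" "\<And>j. v $ j \<noteq> 0"
    by (metis fst_conv less_irrefl snd_conv)+
  then show ?thesis unfolding sinkhorn_def uv by (simp add: rank_diag_scale)
qed



definition mlp :: "'v set \<Rightarrow> ('v set \<Rightarrow> real) \<Rightarrow> ('v \<Rightarrow> real) \<Rightarrow> real" where
  "mlp V c z = (\<Sum>T\<in>Pow V. c T * prod z T)"

lemma mlp_cong: "(\<And>u. u \<in> V \<Longrightarrow> z u = z' u) \<Longrightarrow> mlp V c z = mlp V c z'"
  unfolding mlp_def by (intro sum.cong refl arg_cong2[where f="(*)"] prod.cong) auto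

lemma mlp_insert:
  assumes "finite V" "v \<notin> V"
  shows "mlp (insert v V) c z = z v * mlp V (\<lambda>T. c (insert v T)) z + mlp V c z"
proof -
  have d: "Pow V \<inter> insert v ` Pow V = {}" using assms(2) by auto
  have inj: "inj_on (insert v) (Pow V)" using assms(2) unfolding inj_on_def
    by (metis PowD insert_ident subsetD)
  have "mlp (insert v V) c z = (\<Sum>T\<in>Pow V. c T * prod z T) + (\<Sum>T\<in>insert v ` Pow V. c T * prod z T)"
    unfolding mlp_def Pow_insert using assms(1) d by (simp add: sum.union_disjoint)
  also have "(\<Sum>T\<in>insert v ` Pow V. c T * prod z T) = (\<Sum>T\<in>Pow V. c (insert v T) * prod z (insert v T))"
    by (simp add: sum.reindex[OF inj])
  also have "\<dots> = (\<Sum>T\<in>Pow V. z v * (c (insert v T) * prod z T))"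
  proof (rule sum.cong[OF refl])
    fix T assume "T \<in> Pow V"
    then have "finite T" "v \<notin> T" using assms finite_subset by auto
    then show "c (insert v T) * prod z (insert v T) = z v * (c (insert v T) * prod z T)" by simp
  qed
  finally show ?thesis by (simp add: mlp_def sum_distrib_left)
qed

lemma mlp_measurable:
  assumes "finite V"
  shows "(\<lambda>w. mlp V c w) \<in> borel_measurable (PiM V (\<lambda>_. borel))"
  unfolding mlp_def
proof (intro borel_measurable_sum borel_measurable_times borel_measurable_const borel_measurable_prod)
  fix T i assume "T \<in> Pow V" "i \<in> T"
  then show "(\<lambda>x. x i) \<in> borel_measurable (PiM V (\<lambda>_. borel))"
    by (intro measurable_component_singleton) auto
qed

lemma (in prob_space) indep_eq_null:
  fixes U Y :: "'a \<Rightarrow> real"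
  assumes ind: "indep_var borel U borel Y"
    and at: "\<And>c. emeasure M {\<omega>\<in>space M. Y \<omega> = c} = 0"
  shows "AE \<omega> in M. U \<omega> \<noteq> Y \<omega>"
proof -
  from ind[unfolded indep_var_distribution_eq] have rvU: "random_variable borel U"
    and rvY: "random_variable borel Y"
    and eq: "distr M borel U \<Otimes>\<^sub>M distr M borel Y = distr M (borel \<Otimes>\<^sub>M borel) (\<lambda>x. (U x, Y x))"
    by auto
  define D where "D = {p :: real \<times> real. fst p = snd p}"
  have Dm: "D \<in> sets (borel \<Otimes>\<^sub>M borel)"
  proof -
    have "{x \<in> space (borel \<Otimes>\<^sub>M borel). fst x = (snd x::real)} \<in> sets (borel \<Otimes>\<^sub>M (borel::real measure))"
      by (intro measurable_equality_set) measurable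
    then show ?thesis by (simp add: D_def space_pair_measure)
  qed
  have pm: "(\<lambda>x. (U x, Y x)) \<in> measurable M (borel \<Otimes>\<^sub>M borel)" using rvU rvY by measurable
  have "emeasure M {\<omega>\<in>space M. U \<omega> = Y \<omega>} = emeasure (distr M (borel \<Otimes>\<^sub>M borel) (\<lambda>x. (U x, Y x))) D"
    using pm Dm by (subst emeasure_distr) (auto simp: D_def intro!: arg_cong[where f="emeasure M"])
  also have "\<dots> = emeasure (distr M borel U \<Otimes>\<^sub>M distr M borel Y) D" by (simp add: eq)
  also have "\<dots> = (\<integral>\<^sup>+u. emeasure (distr M borel Y) (Pair u -` D) \<partial>distr M borel U)"
  proof -
    interpret Y: prob_space "distr M borel Y" using rvY by (rule prob_space_distr)
    show ?thesis using Dm by (intro Y.emeasure_pair_measure_alt) simp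
  qed
  also have "\<dots> = (\<integral>\<^sup>+u. 0 \<partial>distr M borel U)"
  proof (rule nn_integral_cong)
    fix u
    have "Pair u -` D = {u}" by (auto simp: D_def)
    moreover have "emeasure (distr M borel Y) {u} = emeasure M {\<omega>\<in>space M. Y \<omega> = u}"
      using rvY by (subst emeasure_distr) (auto intro!: arg_cong[where f="emeasure M"])
    ultimately show "emeasure (distr M borel Y) (Pair u -` D) = 0" using at by simp
  qed
  finally have z: "emeasure M {\<omega>\<in>space M. U \<omega> = Y \<omega>} = 0" by simp
  show ?thesis
    by (subst AE_iff_measurable[OF _ refl]) (use rvU rvY z in \<open>auto intro: measurable_equality_set\<close>)
qed



lemma (in prob_space) mlp_nonzero_AE:
  fixes Z :: "'v \<Rightarrow> 'a \<Rightarrow> real"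
  assumes "finite V" "indep_vars (\<lambda>_. borel) Z V"
    and "\<And>v c. v \<in> V \<Longrightarrow> emeasure M {\<omega>\<in>space M. Z v \<omega> = c} = 0"
    and "T0 \<subseteq> V" "c T0 \<noteq> 0"
  shows "AE \<omega> in M. mlp V c (\<lambda>u. Z u \<omega>) \<noteq> 0"
  using assms
proof (induction V arbitrary: c T0 rule: finite_induct)
  case empty
  then show ?case by (simp add: mlp_def)
next
  case (insert v V)
  have indV: "indep_vars (\<lambda>_. borel) Z V"
    using insert.prems(1) by (rule indep_vars_subset) auto
  define c1 where "c1 = (\<lambda>T. c (insert v T))"
  have split: "mlp (insert v V) c (\<lambda>u. Z u \<omega>) = Z v \<omega> * mlp V c1 (\<lambda>u. Z u \<omega>) + mlp V c (\<lambda>u. Z u \<omega>)" for \<omega>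
    unfolding c1_def by (rule mlp_insert[OF insert.hyps])
  show ?case
  proof (cases "\<exists>T\<subseteq>V. c1 T \<noteq> 0")
    case True
    then obtain T1 where T1: "T1 \<subseteq> V" "c1 T1 \<noteq> 0" by blast
    have G: "AE \<omega> in M. mlp V c1 (\<lambda>u. Z u \<omega>) \<noteq> 0"
      by (rule insert.IH[OF indV]) (use insert.prems(2) T1 in auto)
    define h where "h = (\<lambda>w. - mlp V c w / mlp V c1 w)"
    have hm: "h \<in> borel_measurable (PiM V (\<lambda>_. borel))"
      unfolding h_def using mlp_measurable[OF insert.hyps(1)]
      by (intro borel_measurable_divide borel_measurable_uminus) auto
    have ind2: "indep_var borel (h \<circ> (\<lambda>\<omega>. restrict (\<lambda>i. Z i \<omega>) V))
                 borel ((\<lambda>f. f v) \<circ> (\<lambda>\<omega>. restrict (\<lambda>i. Z i \<omega>) {v}))"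
      using insert.hyps
      by (intro indep_var_compose[OF indep_var_restrict[OF insert.prems(1)]] hm)
         (auto intro: measurable_component_singleton)
    have e1: "(h \<circ> (\<lambda>\<omega>. restrict (\<lambda>i. Z i \<omega>) V)) = (\<lambda>\<omega>. - mlp V c (\<lambda>u. Z u \<omega>) / mlp V c1 (\<lambda>u. Z u \<omega>))"
      unfolding h_def comp_def
      by (intro ext arg_cong2[where f="(/)"] arg_cong[where f=uminus] mlp_cong) auto
    have e2: "((\<lambda>f. f v) \<circ> (\<lambda>\<omega>. restrict (\<lambda>i. Z i \<omega>) {v})) = Z v" by auto
    have Zv: "AE \<omega> in M. - mlp V c (\<lambda>u. Z u \<omega>) / mlp V c1 (\<lambda>u. Z u \<omega>) \<noteq> Z v \<omega>"
      using indep_eq_null[OF ind2[unfolded e1 e2]] insert.prems(2) by auto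
    show ?thesis
      using G Zv
    proof eventually_elim
      case (elim \<omega>)
      then show ?case unfolding split by (auto simp: field_simps)
    qed
  next
    case False
    then have z: "mlp V c1 z = 0" for z by (simp add: mlp_def)
    have "T0 \<subseteq> V"
    proof (rule ccontr)
      assume "\<not> T0 \<subseteq> V"
      then have "v \<in> T0" using insert.prems(3) by auto
      then have "c1 (T0 - {v}) = c T0" by (simp add: c1_def insert_absorb)
      moreover have "T0 - {v} \<subseteq> V" using insert.prems(3) by auto
      ultimately show False using False insert.prems(4) by auto
    qed
    have "AE \<omega> in M. mlp V c (\<lambda>u. Z u \<omega>) \<noteq> 0"
      by (rule insert.IH[OF indV]) (use insert.prems(2,4) \<open>T0 \<subseteq> V\<close> in auto)
    then show ?thesis unfolding split z by simp
  qed
qed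



definition detcoef :: "('k::finite \<times> 'k \<Rightarrow> 'v) \<Rightarrow> 'v set \<Rightarrow> real" where
  "detcoef e T = (\<Sum>p\<in>{p. p permutes (UNIV::'k set) \<and> range (\<lambda>i. e (i, p i)) = T}. of_int (sign p))"

lemma det_as_mlp:
  fixes e :: "'k::finite \<times> 'k \<Rightarrow> 'v::finite" and z :: "'v \<Rightarrow> real"
  assumes "inj e"
  shows "det (\<chi> i j. z (e (i,j)) :: real^'k^'k) = mlp UNIV (detcoef e) z"
proof -
  let ?P = "{p. p permutes (UNIV::'k set)}"
  let ?G = "\<lambda>p. range (\<lambda>i. e (i, p i))"
  have fP: "finite ?P" by (simp add: finite_permutations)
  have "mlp UNIV (detcoef e) z = (\<Sum>T\<in>Pow UNIV. \<Sum>p\<in>{p \<in> ?P. ?G p = T}. of_int (sign p) * prod z (?G p))"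
    unfolding mlp_def detcoef_def by (simp add: sum_distrib_right)
  also have "\<dots> = (\<Sum>p\<in>?P. of_int (sign p) * prod z (?G p))"
    by (rule sum.group) (auto simp: fP)
  also have "\<dots> = (\<Sum>p\<in>?P. of_int (sign p) * (\<Prod>i\<in>UNIV. z (e (i, p i))))"
  proof (rule sum.cong[OF refl])
    fix p
    have "inj (\<lambda>i. e (i, p i))" using assms unfolding inj_def by auto
    then show "of_int (sign p) * prod z (?G p) = of_int (sign p) * (\<Prod>i\<in>UNIV. z (e (i, p i)))"
      by (simp add: prod.reindex)
  qed
  finally show ?thesis by (simp add: det_def)
qed

lemma detcoef_id:
  fixes e :: "'k::finite \<times> 'k \<Rightarrow> 'v"
  assumes "inj e"
  shows "detcoef e (range (\<lambda>i. e (i, i))) = 1"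
proof -
  have "{p. p permutes (UNIV::'k set) \<and> range (\<lambda>i. e (i, p i)) = range (\<lambda>i. e (i, i))} = {id}"
  proof safe
    fix p :: "'k \<Rightarrow> 'k" assume "p permutes UNIV" and eq: "range (\<lambda>i. e (i, p i)) = range (\<lambda>i. e (i, i))"
    show "p = id"
    proof
      fix i
      have "e (i, p i) \<in> range (\<lambda>i. e (i, i))" using eq by blast
      then obtain i' where "e (i, p i) = e (i', i')" by auto
      then show "p i = id i" using assms by (auto dest: injD)
    qed
  qed (auto simp: permutes_id)
  then show ?thesis by (simp add: detcoef_def sign_id)
qed

lemma (in prob_space) rank_full_AE:
  fixes X :: "('n::finite \<times> 'm::finite) \<Rightarrow> 'a \<Rightarrow> real" and f :: "real \<Rightarrow> real"
  assumes ind: "indep_vars (\<lambda>_. borel) X UNIV"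
    and at: "\<And>p c. emeasure M {\<omega>\<in>space M. X p \<omega> = c} = 0"
    and f: "inj f" "f \<in> borel_measurable borel"
  shows "AE \<omega> in M. rank (\<chi> i j. f (X (i, j) \<omega>) :: real^'m^'n) = min CARD('n) CARD('m)"
proof -
  define Z where "Z = (\<lambda>p \<omega>. f (X p \<omega>))"
  have indZ: "indep_vars (\<lambda>_. borel) Z UNIV"
    unfolding Z_def by (rule indep_vars_compose2[OF ind]) (use f in auto)
  have atZ: "emeasure M {\<omega>\<in>space M. Z p \<omega> = c} = 0" for p c
  proof (cases "\<exists>x. f x = c")
    case True
    then obtain x where "f x = c" by blast
    then have "{\<omega>\<in>space M. Z p \<omega> = c} = {\<omega>\<in>space M. X p \<omega> = x}"
      using f(1) by (auto simp: Z_def dest: injD)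
    then show ?thesis using at by simp
  next
    case False
    then have "{\<omega>\<in>space M. Z p \<omega> = c} = {}" by (auto simp: Z_def)
    then show ?thesis by (metis emeasure_empty)
  qed
  have key: "AE \<omega> in M. det (\<chi> i j. Z (e (i,j)) \<omega> :: real^'k^'k) \<noteq> 0"
    if e: "inj (e :: 'k::finite \<times> 'k \<Rightarrow> 'n \<times> 'm)" for e
  proof -
    have "AE \<omega> in M. mlp UNIV (detcoef e) (\<lambda>u. Z u \<omega>) \<noteq> 0"
      by (rule mlp_nonzero_AE[OF _ indZ atZ, of "range (\<lambda>i. e (i, i))"])
         (auto simp: detcoef_id[OF e])
    then show ?thesis
    proof eventually_elim
      case (elim \<omega>)
      then show ?case using det_as_mlp[OF e, of "\<lambda>u. Z u \<omega>"] by simp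
    qed
  qed
  show ?thesis
  proof (cases "CARD('n) \<le> CARD('m)")
    case True
    then obtain \<sigma> :: "'n \<Rightarrow> 'm" where \<sigma>: "inj \<sigma>"
      using card_le_inj[of "UNIV::'n set" "UNIV::'m set"] by auto
    define e where "e = (\<lambda>(i::'n, i'::'n). (i, \<sigma> i'))"
    have e: "inj e" using \<sigma> unfolding e_def inj_def by (auto dest: injD)
    show ?thesis using key[OF e]
    proof eventually_elim
      case (elim \<omega>)
      then have "det (\<chi> i i'. (\<chi> i j. f (X (i, j) \<omega>) :: real^'m^'n) $ i $ \<sigma> i') \<noteq> 0"
        by (simp add: e_def Z_def)
      then show ?case using rank_sub_cols[OF \<sigma>] True by (simp add: min_def)
    qed
  next
    case False
    then obtain \<sigma> :: "'m \<Rightarrow> 'n" where \<sigma>: "inj \<sigma>"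
      using card_le_inj[of "UNIV::'m set" "UNIV::'n set"] by auto
    define e where "e = (\<lambda>(j'::'m, j::'m). (\<sigma> j', j))"
    have e: "inj e" using \<sigma> unfolding e_def inj_def by (auto dest: injD)
    show ?thesis using key[OF e]
    proof eventually_elim
      case (elim \<omega>)
      then have "det (\<chi> j' j. (\<chi> i j. f (X (i, j) \<omega>) :: real^'m^'n) $ \<sigma> j' $ j) \<noteq> 0"
        by (simp add: e_def Z_def)
      then show ?case using rank_sub_rows[OF \<sigma>] False by (simp add: min_def)
    qed
  qed
qed



theorem proposition7:
  fixes M :: "'s measure"
    and X :: "('n::finite \<times> 'm::finite) \<Rightarrow> 's \<Rightarrow> real"
    and a :: "real^'n" and b :: "real^'m"
  assumes "prob_space M"
    and "prob_space.indep_vars M (\<lambda>_. borel) X UNIV"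
    and "\<And>p. X p \<in> borel_measurable M"
    and "\<And>p. distr M lborel (X p) = uniform_measure lborel {0<..<1}"
    and "a \<in> prob_simplex" and "\<And>i. a $ i > 0"
    and "b \<in> prob_simplex" and "\<And>j. b $ j > 0"
  shows "AE \<omega> in M.
           rank (\<chi> i j. exp (X (i, j) \<omega>) :: real^'m^'n) = min CARD('n) CARD('m)
         \<and> rank (\<chi> i j. exp (- X (i, j) \<omega>) :: real^'m^'n) = min CARD('n) CARD('m)
         \<and> (\<forall>N. rank (sinkhorn (\<chi> i j. exp (- X (i, j) \<omega>)) a b N) = min CARD('n) CARD('m))"
proof -
  interpret prob_space M by (rule assms(1))
  have at: "emeasure M {\<omega>\<in>space M. X p \<omega> = c} = 0" for p c
  proof -
    have "emeasure M {\<omega>\<in>space M. X p \<omega> = c} = emeasure (distr M lborel (X p)) {c}"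
      using assms(3) by (subst emeasure_distr) (auto intro!: arg_cong[where f="emeasure M"])
    also have "\<dots> = emeasure lborel ({0<..<1} \<inter> {c}) / emeasure lborel {0<..<(1::real)}"
      by (simp add: assms(4))
    also have "emeasure lborel ({0<..<1} \<inter> {c}) = 0"
    proof -
      have "emeasure lborel ({0<..<1} \<inter> {c}) \<le> emeasure lborel {c}"
        by (intro emeasure_mono) auto
      then show ?thesis by simp
    qed
    finally show ?thesis by simp
  qed
  have inj1: "inj (\<lambda>x::real. exp x)" by (auto simp: inj_def)
  have inj2: "inj (\<lambda>x::real. exp (- x))" by (auto simp: inj_def)
  have A1: "AE \<omega> in M. rank (\<chi> i j. exp (X (i, j) \<omega>) :: real^'m^'n) = min CARD('n) CARD('m)"
    using rank_full_AE[OF assms(2) at inj1] by simp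
  have A2: "AE \<omega> in M. rank (\<chi> i j. exp (- X (i, j) \<omega>) :: real^'m^'n) = min CARD('n) CARD('m)"
    using rank_full_AE[OF assms(2) at inj2] by simp
  show ?thesis using A1 A2
  proof eventually_elim
    case (elim \<omega>)
    have "rank (sinkhorn (\<chi> i j. exp (- X (i, j) \<omega>)) a b N) = rank (\<chi> i j. exp (- X (i, j) \<omega>) :: real^'m^'n)" for N
      by (rule sinkhorn_rank) (use assms(6,8) in auto)
    then show ?case using elim by simp
  qed
qed


end
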